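(* Let $\mathcal{S}=(X,\xrightarrow{\Sigma},\le)$ be a WSTS with strong monotonicity whose completion $\widehat{\mathcal{S}}$ is deterministic and has strong-strict monotonicity. For every $I\in\mathrm{Idl}(X)$ and $w\in\Sigma^+$: (1) if $\{J: I\xRightarrow{w}J\}\ne\emptyset$ and $I\in\mathrm{Idl}_n(X)$ for some $n\in\mathbb{N}$, then $w(I)\in\mathrm{Idl}_n(X)$; (2) if $I\subset w(I)$ and $I\in\mathrm{Idl}_n(X)$ for some $n\in\mathbb{N}$, then $w^\infty(I)\in\mathrm{Idl}_{n+1}(X)$.
   Context: A (labeled, ordered) transition system is $\mathcal{S}=(X,\xrightarrow{\Sigma},\le)$: $X$ a set, $\Sigma$ a finite alphabet, $\xrightarrow{a}\subseteq X\times X$ for $a\in\Sigma$, $\le$ a quasi-ordering; relations extend to words ($x\xrightarrow{\varepsilon}x$, $x\xrightarrow{wa}y$ iff $x\xrightarrow{w}x'\xrightarrow{a}y$ for some $x'$). $\mathrm{Post}(x,w)=\{y:x\xrightarrow{w}y\}$, extended to sets by union; $\downarrow D=\{x:\exists y\in D,\,x\le y\}$. WSTS: $\le$ is a wqo and $x\xrightarrow{a}y$, $x'\ge x$ imply $x'\xrightarrow{w}y'$ for some $w\in\Sigma^*$ and $y'\ge y$. Strong monotonicity: $x\xrightarrow{a}y$, $x'\ge x$ imply $x'\xrightarrow{a}y'$ for some $y'\ge y$; strong-strict monotonicity: additionally $x\xrightarrow{a}y$, $x'>x$ imply $x'\xrightarrow{a}y'$ for some $y'>y$. Deterministic: at most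 one $a$-successor for each state and letter. Ideal: nonempty downward-closed directed subset of $X$; $\mathrm{Idl}(X)$ the set of ideals. For downward-closed $D$, $\mathrm{IdealDecomp}(D)$ is the finite set of $\subseteq$-maximal ideals contained in $D$. Completion: $\widehat{\mathcal{S}}=(\mathrm{Idl}(X),\Rightarrow_\Sigma,\subseteq)$ with $I\xRightarrow{a}J$ iff $J\in\mathrm{IdealDecomp}(\downarrow\mathrm{Post}(I,a))$, extended to words. When $\widehat{\mathcal{S}}$ is deterministic, $w(I)$ is the unique $J$ with $I\xRightarrow{w}J$ (when it exists). Acceleration: $w^\infty(I)=\bigcup_{k\in\mathbb{N}}w^k(I)$ if $I\subset w(I)$, else $I$. Levels: $\mathrm{Idl}_0(X)=\mathrm{Idl}(X)$; $\mathrm{Idl}_n(X)=\{\bigcup_iI_i: I_0\subset I_1\subset\cdots,\ I_i\in\mathrm{Idl}_{n-1}(X)\}$ for $n>0$. *)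

theory Defs
  imports Main
begin

text \<open>A labeled ordered transition system: states are the elements of the type 'x
(so X = UNIV), the alphabet is the finite type 's, step a x y means x goes to y
by letter a, and le is the quasi-ordering.\<close>

definition quasi_order :: "('x \<Rightarrow> 'x \<Rightarrow> bool) \<Rightarrow> bool" where
  "quasi_order le \<longleftrightarrow> (\<forall>x. le x x) \<and> (\<forall>x y z. le x y \<longrightarrow> le y z \<longrightarrow> le x z)"

definition wqo :: "('x \<Rightarrow> 'x \<Rightarrow> bool) \<Rightarrow> bool" where
  "wqo le \<longleftrightarrow> quasi_order le \<and> (\<forall>f :: nat \<Rightarrow> 'x. \<exists>i j. i < j \<and> le (f i) (f j))"

fun steps :: "('s \<Rightarrow> 'b \<Rightarrow> 'b \<Rightarrow> bool) \<Rightarrow> 's list \<Rightarrow> 'b \<Rightarrow> 'b \<Rightarrow> bool" where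
  "steps r [] x y \<longleftrightarrow> x = y"
| "steps r (a # w) x y \<longleftrightarrow> (\<exists>x'. r a x x' \<and> steps r w x' y)"

definition wsts :: "('s::finite \<Rightarrow> 'x \<Rightarrow> 'x \<Rightarrow> bool) \<Rightarrow> ('x \<Rightarrow> 'x \<Rightarrow> bool) \<Rightarrow> bool" where
  "wsts step le \<longleftrightarrow> wqo le \<and>
     (\<forall>a x y x'. step a x y \<longrightarrow> le x x' \<longrightarrow> (\<exists>w y'. steps step w x' y' \<and> le y y'))"

definition strong_mono :: "('s \<Rightarrow> 'x \<Rightarrow> 'x \<Rightarrow> bool) \<Rightarrow> ('x \<Rightarrow> 'x \<Rightarrow> bool) \<Rightarrow> bool" where
  "strong_mono step le \<longleftrightarrow>
     (\<forall>a x y x'. step a x y \<longrightarrow> le x x' \<longrightarrow> (\<exists>y'. step a x' y' \<and> le y y'))"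

definition Post :: "('s \<Rightarrow> 'x \<Rightarrow> 'x \<Rightarrow> bool) \<Rightarrow> 'x set \<Rightarrow> 's \<Rightarrow> 'x set" where
  "Post step D a = {y. \<exists>x\<in>D. step a x y}"

definition down :: "('x \<Rightarrow> 'x \<Rightarrow> bool) \<Rightarrow> 'x set \<Rightarrow> 'x set" where
  "down le D = {x. \<exists>y\<in>D. le x y}"

definition down_closed :: "('x \<Rightarrow> 'x \<Rightarrow> bool) \<Rightarrow> 'x set \<Rightarrow> bool" where
  "down_closed le D \<longleftrightarrow> (\<forall>x y. y \<in> D \<longrightarrow> le x y \<longrightarrow> x \<in> D)"

definition directed :: "('x \<Rightarrow> 'x \<Rightarrow> bool) \<Rightarrow> 'x set \<Rightarrow> bool" where
  "directed le D \<longleftrightarrow> (\<forall>x\<in>D. \<forall>y\<in>D. \<exists>z\<in>D. le x z \<and> le y z)"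

definition Idl :: "('x \<Rightarrow> 'x \<Rightarrow> bool) \<Rightarrow> 'x set set" where
  "Idl le = {I. I \<noteq> {} \<and> down_closed le I \<and> directed le I}"

definition IdealDecomp :: "('x \<Rightarrow> 'x \<Rightarrow> bool) \<Rightarrow> 'x set \<Rightarrow> 'x set set" where
  "IdealDecomp le D = {I \<in> Idl le. I \<subseteq> D \<and> (\<forall>J\<in>Idl le. J \<subseteq> D \<longrightarrow> I \<subseteq> J \<longrightarrow> J = I)}"

definition cstep :: "('s \<Rightarrow> 'x \<Rightarrow> 'x \<Rightarrow> bool) \<Rightarrow> ('x \<Rightarrow> 'x \<Rightarrow> bool) \<Rightarrow> 's \<Rightarrow> 'x set \<Rightarrow> 'x set \<Rightarrow> bool" where
  "cstep step le a I J \<longleftrightarrow> I \<in> Idl le \<and> J \<in> IdealDecomp le (down le (Post step I a))"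

definition completion_deterministic :: "('s \<Rightarrow> 'x \<Rightarrow> 'x \<Rightarrow> bool) \<Rightarrow> ('x \<Rightarrow> 'x \<Rightarrow> bool) \<Rightarrow> bool" where
  "completion_deterministic step le \<longleftrightarrow>
     (\<forall>a. \<forall>I\<in>Idl le. \<forall>J1 J2. cstep step le a I J1 \<longrightarrow> cstep step le a I J2 \<longrightarrow> J1 = J2)"

definition completion_strong_strict_mono :: "('s \<Rightarrow> 'x \<Rightarrow> 'x \<Rightarrow> bool) \<Rightarrow> ('x \<Rightarrow> 'x \<Rightarrow> bool) \<Rightarrow> bool" where
  "completion_strong_strict_mono step le \<longleftrightarrow>
     (\<forall>a. \<forall>I\<in>Idl le. \<forall>I'\<in>Idl le. \<forall>J. cstep step le a I J \<longrightarrow>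
        (I \<subseteq> I' \<longrightarrow> (\<exists>J'. cstep step le a I' J' \<and> J \<subseteq> J')) \<and>
        (I \<subset> I' \<longrightarrow> (\<exists>J'. cstep step le a I' J' \<and> J \<subset> J')))"

text \<open>w(I): the unique J with I =w=> J (meaningful when it exists).\<close>
definition wapp :: "('s \<Rightarrow> 'x \<Rightarrow> 'x \<Rightarrow> bool) \<Rightarrow> ('x \<Rightarrow> 'x \<Rightarrow> bool) \<Rightarrow> 's list \<Rightarrow> 'x set \<Rightarrow> 'x set" where
  "wapp step le w I = (THE J. steps (cstep step le) w I J)"

definition winf :: "('s \<Rightarrow> 'x \<Rightarrow> 'x \<Rightarrow> bool) \<Rightarrow> ('x \<Rightarrow> 'x \<Rightarrow> bool) \<Rightarrow> 's list \<Rightarrow> 'x set \<Rightarrow> 'x set" where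
  "winf step le w I =
     (if I \<subset> wapp step le w I then (\<Union>k. (wapp step le w ^^ k) I) else I)"

fun IdlLevel :: "('x \<Rightarrow> 'x \<Rightarrow> bool) \<Rightarrow> nat \<Rightarrow> 'x set set" where
  "IdlLevel le 0 = Idl le"
| "IdlLevel le (Suc n) =
     {(\<Union>i. f i) | f. (\<forall>i. f i \<in> IdlLevel le n) \<and> (\<forall>i. f i \<subset> f (Suc i))}"

end

theory Submission
  imports Defs
begin

lemma qo_of_wsts: "wsts step le \<Longrightarrow> quasi_order le"
  by (simp add: wsts_def wqo_def)

lemma chain_union_ideal:
  assumes "C \<noteq> {}" "C \<subseteq> Idl le" "\<forall>X\<in>C. \<forall>Y\<in>C. X \<subseteq> Y \<or> Y \<subseteq> X"
  shows "\<Union>C \<in> Idl le"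
proof -
  have ne: "\<Union>C \<noteq> {}" using assms(1,2) by (auto simp: Idl_def)
  have dc: "down_closed le (\<Union>C)" using assms(2) unfolding Idl_def down_closed_def by blast
  have dir: "directed le (\<Union>C)"
    unfolding directed_def
  proof (intro ballI)
    fix x y assume "x \<in> \<Union>C" "y \<in> \<Union>C"
    then obtain X Y where XY: "X \<in> C" "Y \<in> C" "x \<in> X" "y \<in> Y" by auto
    show "\<exists>z\<in>\<Union>C. le x z \<and> le y z"
    proof (cases "X \<subseteq> Y")
      case True
      with XY assms(2) show ?thesis unfolding Idl_def directed_def by blast
    next
      case False
      with assms(3) XY have "Y \<subseteq> X" by blast
      with XY assms(2) show ?thesis unfolding Idl_def directed_def by blast
    qed
  qed
  show ?thesis using ne dc dir by (simp add: Idl_def)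
qed

lemma decomp_exists:
  assumes qo: "quasi_order le" and dc: "down_closed le D" and x: "x \<in> D"
  shows "\<exists>J\<in>IdealDecomp le D. x \<in> J"
proof -
  define A where "A = {J \<in> Idl le. x \<in> J \<and> J \<subseteq> D}"
  have "down le {x} \<in> A"
    using qo dc x unfolding A_def Idl_def down_def down_closed_def directed_def quasi_order_def
    by blast
  hence ne: "A \<noteq> {}" by blast
  have "\<exists>M\<in>A. \<forall>X\<in>A. M \<subseteq> X \<longrightarrow> X = M"
  proof (rule subset_Zorn_nonempty[OF ne])
    fix C assume "C \<noteq> {}" "subset.chain A C"
    hence "C \<subseteq> A" "\<forall>X\<in>C. \<forall>Y\<in>C. X \<subseteq> Y \<or> Y \<subseteq> X"
      by (auto simp: subset.chain_def)
    moreover have "\<Union>C \<in> Idl le"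
      using chain_union_ideal[of C le] \<open>C \<noteq> {}\<close> calculation unfolding A_def by blast
    ultimately show "\<Union>C \<in> A" using \<open>C \<noteq> {}\<close> unfolding A_def by blast
  qed
  then obtain M where M: "M \<in> A" "\<forall>X\<in>A. M \<subseteq> X \<longrightarrow> X = M" by blast
  have "M \<in> IdealDecomp le D"
    using M unfolding IdealDecomp_def A_def by blast
  thus ?thesis using M unfolding A_def by blast
qed

lemma down_dc: "quasi_order le \<Longrightarrow> down_closed le (down le S)"
  unfolding quasi_order_def down_closed_def down_def by blast

lemma cstep_fwd:
  assumes qo: "quasi_order le" and det: "completion_deterministic step le"
    and I: "I \<in> Idl le" and c: "cstep step le a I J"
  shows "J = down le (Post step I a) \<and> J \<noteq> {}"
proof -
  let ?D = "down le (Post step I a)"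
  have J: "J \<in> IdealDecomp le ?D" using c by (simp add: cstep_def)
  hence sub: "J \<subseteq> ?D" and ne: "J \<noteq> {}" by (auto simp: IdealDecomp_def Idl_def)
  have "?D \<subseteq> J"
  proof
    fix x assume "x \<in> ?D"
    then obtain J' where "J' \<in> IdealDecomp le ?D" "x \<in> J'"
      using decomp_exists[OF qo down_dc[OF qo]] by blast
    hence "cstep step le a I J'" using I by (simp add: cstep_def)
    with det c I have "J' = J" unfolding completion_deterministic_def by blast
    with \<open>x \<in> J'\<close> show "x \<in> J" by simp
  qed
  with sub ne show ?thesis by blast
qed

lemma cstep_iff:
  assumes qo: "quasi_order le" and det: "completion_deterministic step le"
    and I: "I \<in> Idl le"
  shows "cstep step le a I J \<longleftrightarrow> (J = down le (Post step I a) \<and> J \<noteq> {})"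
proof
  assume "cstep step le a I J" thus "J = down le (Post step I a) \<and> J \<noteq> {}"
    using cstep_fwd[OF qo det I] by blast
next
  assume h: "J = down le (Post step I a) \<and> J \<noteq> {}"
  then obtain x where "x \<in> down le (Post step I a)" by blast
  then obtain J' where "J' \<in> IdealDecomp le (down le (Post step I a))"
    using decomp_exists[OF qo down_dc[OF qo]] by blast
  hence c: "cstep step le a I J'" using I by (simp add: cstep_def)
  with cstep_fwd[OF qo det I c] h show "cstep step le a I J" by simp
qed

lemma cstep_Idl: "cstep step le a I J \<Longrightarrow> J \<in> Idl le"
  by (simp add: cstep_def IdealDecomp_def)

fun Pw :: "('s \<Rightarrow> 'x \<Rightarrow> 'x \<Rightarrow> bool) \<Rightarrow> ('x \<Rightarrow> 'x \<Rightarrow> bool) \<Rightarrow> 's list \<Rightarrow> 'x set \<Rightarrow> 'x set" where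
  "Pw step le [] I = I"
| "Pw step le (a # w) I = Pw step le w (down le (Post step I a))"

lemma Pw_empty: "Pw step le w {} = {}"
  by (induction w) (auto simp: Post_def down_def)

lemma Pw_mono: "I \<subseteq> I' \<Longrightarrow> Pw step le w I \<subseteq> Pw step le w I'"
proof (induction w arbitrary: I I')
  case Nil thus ?case by simp
next
  case (Cons a w)
  have "down le (Post step I a) \<subseteq> down le (Post step I' a)"
    using Cons.prems by (auto simp: Post_def down_def)
  thus ?case using Cons.IH by simp
qed

lemma Pw_Union: "Pw step le w (\<Union>S) = \<Union>(Pw step le w ` S)"
proof (induction w arbitrary: S)
  case Nil thus ?case by simp
next
  case (Cons a w)
  have "down le (Post step (\<Union>S) a) = \<Union>((\<lambda>I. down le (Post step I a)) ` S)"
    by (auto simp: Post_def down_def)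
  thus ?case using Cons.IH by (simp add: image_image)
qed

lemma steps_iff:
  assumes qo: "quasi_order le" and det: "completion_deterministic step le"
  shows "I \<in> Idl le \<Longrightarrow> steps (cstep step le) w I J \<longleftrightarrow> (J = Pw step le w I \<and> J \<noteq> {})"
proof (induction w arbitrary: I)
  case Nil thus ?case by (auto simp: Idl_def)
next
  case (Cons a w)
  let ?D = "down le (Post step I a)"
  show ?case
  proof
    assume "steps (cstep step le) (a # w) I J"
    then obtain x' where c: "cstep step le a I x'" and s: "steps (cstep step le) w x' J" by auto
    have "x' = ?D" using cstep_iff[OF qo det Cons.prems] c by blast
    moreover from Cons.IH[OF cstep_Idl[OF c]] s have "J = Pw step le w x' \<and> J \<noteq> {}" by blast
    ultimately show "J = Pw step le (a # w) I \<and> J \<noteq> {}" by (metis Pw.simps(2))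
  next
    assume h: "J = Pw step le (a # w) I \<and> J \<noteq> {}"
    hence "?D \<noteq> {}" using Pw_empty by fastforce
    hence c: "cstep step le a I ?D" using cstep_iff[OF qo det Cons.prems] by blast
    with Cons.IH[OF cstep_Idl[OF c]] h show "steps (cstep step le) (a # w) I J" by auto
  qed
qed

lemma steps_Idl: "I \<in> Idl le \<Longrightarrow> steps (cstep step le) w I J \<Longrightarrow> J \<in> Idl le"
  by (induction w arbitrary: I) (auto dest: cstep_Idl)

lemma steps_ssm:
  assumes ssm: "completion_strong_strict_mono step le"
  shows "I \<in> Idl le \<Longrightarrow> I' \<in> Idl le \<Longrightarrow> I \<subset> I' \<Longrightarrow> steps (cstep step le) w I J
    \<Longrightarrow> \<exists>J'. steps (cstep step le) w I' J' \<and> J \<subset> J'"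
proof (induction w arbitrary: I I')
  case Nil thus ?case by auto
next
  case (Cons a w)
  then obtain x where c: "cstep step le a I x" and s: "steps (cstep step le) w x J" by auto
  have "\<exists>x'. cstep step le a I' x' \<and> x \<subset> x'"
    using ssm Cons.prems(1,2,3) c unfolding completion_strong_strict_mono_def by blast
  then obtain x' where c': "cstep step le a I' x'" and "x \<subset> x'" by blast
  with Cons.IH[OF cstep_Idl[OF c] cstep_Idl[OF c'] _ s] c' show ?case by auto
qed

lemma chain_mono:
  assumes "\<forall>i. f i \<subset> f (Suc i)" "i \<le> j"
  shows "f i \<subseteq> (f j :: 'a set)"
  using lift_Suc_mono_le[of f, OF _ assms(2)] assms(1) by blast

lemma level_Idl: "IdlLevel le n \<subseteq> Idl le"
proof (induction n)
  case 0 thus ?case by simp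
next
  case (Suc n)
  show ?case
  proof
    fix X assume "X \<in> IdlLevel le (Suc n)"
    then obtain f where X: "X = (\<Union>i. f i)" and f: "\<forall>i. f i \<in> IdlLevel le n" "\<forall>i. f i \<subset> f (Suc i)"
      by auto
    have "\<forall>A\<in>range f. \<forall>B\<in>range f. A \<subseteq> B \<or> B \<subseteq> A"
    proof (intro ballI)
      fix A B assume "A \<in> range f" "B \<in> range f"
      then obtain i j where "A = f i" "B = f j" by auto
      thus "A \<subseteq> B \<or> B \<subseteq> A" using chain_mono[OF f(2)] by (cases "i \<le> j") auto
    qed
    moreover have "range f \<subseteq> Idl le" using f(1) Suc.IH by blast
    ultimately have "\<Union>(range f) \<in> Idl le" using chain_union_ideal[of "range f" le] by blast
    thus "X \<in> Idl le" using X by simp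
  qed
qed

lemma L1:
  assumes qo: "quasi_order le" and det: "completion_deterministic step le"
    and ssm: "completion_strong_strict_mono step le"
  shows "\<forall>I\<in>IdlLevel le n. \<forall>w. Pw step le w I \<noteq> {} \<longrightarrow> Pw step le w I \<in> IdlLevel le n"
proof (induction n)
  case 0
  show ?case
  proof (intro ballI allI impI)
    fix I w assume I: "I \<in> IdlLevel le 0" and ne: "Pw step le w I \<noteq> {}"
    hence "I \<in> Idl le" by simp
    moreover have "steps (cstep step le) w I (Pw step le w I)"
      using steps_iff[OF qo det calculation] ne by blast
    ultimately show "Pw step le w I \<in> IdlLevel le 0" using steps_Idl by force
  qed
next
  case (Suc n)
  show ?case
  proof (intro ballI allI impI)
    fix I w assume I: "I \<in> IdlLevel le (Suc n)" and ne: "Pw step le w I \<noteq> {}"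
    then obtain f where X: "I = (\<Union>i. f i)" and f: "\<forall>i. f i \<in> IdlLevel le n" "\<forall>i. f i \<subset> f (Suc i)"
      by auto
    have PU: "Pw step le w I = (\<Union>i. Pw step le w (f i))"
      using Pw_Union[of step le w "range f"] X by (simp add: image_image)
    then obtain i0 where i0: "Pw step le w (f i0) \<noteq> {}" using ne by auto
    define g where "g i = Pw step le w (f (i + i0))" for i
    have fI: "f i \<in> Idl le" for i using f(1) level_Idl by blast
    have gne: "g i \<noteq> {}" for i
    proof -
      have "f i0 \<subseteq> f (i + i0)" using chain_mono[OF f(2), of i0 "i + i0"] by simp
      hence "Pw step le w (f i0) \<subseteq> Pw step le w (f (i + i0))" by (rule Pw_mono)
      thus ?thesis using i0 unfolding g_def by blast
    qed
    have g1: "\<forall>i. g i \<in> IdlLevel le n" using Suc.IH f(1) gne unfolding g_def by blast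
    have g2: "\<forall>i. g i \<subset> g (Suc i)"
    proof
      fix i
      have st: "steps (cstep step le) w (f (i + i0)) (g i)"
        using gne[of i] unfolding g_def by (subst steps_iff[OF qo det fI]) simp
      have fs: "f (i + i0) \<subset> f (Suc (i + i0))" using f(2) by blast
      obtain J' where J': "steps (cstep step le) w (f (Suc (i + i0))) J'" "g i \<subset> J'"
        using steps_ssm[OF ssm fI fI fs st] by blast
      have "J' = g (Suc i)" using steps_iff[OF qo det fI] J'(1) unfolding g_def by simp
      thus "g i \<subset> g (Suc i)" using J'(2) by simp
    qed
    have "Pw step le w I = (\<Union>i. g i)"
    proof
      show "(\<Union>i. g i) \<subseteq> Pw step le w I" unfolding PU g_def by blast
      show "Pw step le w I \<subseteq> (\<Union>i. g i)"
      proof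
        fix x assume "x \<in> Pw step le w I"
        then obtain j where "x \<in> Pw step le w (f j)" using PU by auto
        hence "x \<in> g j" using Pw_mono[OF chain_mono[OF f(2), of j "j + i0"]] unfolding g_def by auto
        thus "x \<in> (\<Union>i. g i)" by blast
      qed
    qed
    hence "\<exists>f. Pw step le w I = (\<Union>i. f i) \<and> (\<forall>i. f i \<in> IdlLevel le n) \<and> (\<forall>i. f i \<subset> f (Suc i))"
      using g1 g2 by blast
    thus "Pw step le w I \<in> IdlLevel le (Suc n)" by (simp only: IdlLevel.simps mem_Collect_eq)
  qed
qed

lemma wapp_eq:
  assumes qo: "quasi_order le" and det: "completion_deterministic step le"
    and I: "I \<in> Idl le" and s: "steps (cstep step le) w I J"
  shows "wapp step le w I = J"
  unfolding wapp_def
proof (rule the_equality)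
  show "steps (cstep step le) w I J" by (rule s)
  fix J' assume "steps (cstep step le) w I J'"
  from steps_iff[OF qo det I, THEN iffD1, OF this] steps_iff[OF qo det I, THEN iffD1, OF s]
  show "J' = J" by simp
qed

theorem proposition6:
  fixes step :: "'s::finite \<Rightarrow> 'x \<Rightarrow> 'x \<Rightarrow> bool"
    and le :: "'x \<Rightarrow> 'x \<Rightarrow> bool"
  assumes "wsts step le"
    and "strong_mono step le"
    and "completion_deterministic step le"
    and "completion_strong_strict_mono step le"
  shows "\<forall>I\<in>Idl le. \<forall>w. w \<noteq> [] \<longrightarrow>
           (\<forall>n. (\<exists>J. steps (cstep step le) w I J) \<and> I \<in> IdlLevel le n
                  \<longrightarrow> wapp step le w I \<in> IdlLevel le n) \<and>
           (\<forall>n. (\<exists>J. steps (cstep step le) w I J) \<and> I \<subset> wapp step le w I \<and> I \<in> IdlLevel le n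
                  \<longrightarrow> winf step le w I \<in> IdlLevel le (Suc n))"
proof (rule ballI, rule allI, rule impI)
  have qo: "quasi_order le" using assms(1) by (rule qo_of_wsts)
  note det = assms(3) and ssm = assms(4)
  note L = L1[OF qo det ssm]
  fix I and w :: "'s list"
  assume I: "I \<in> Idl le" and "w \<noteq> []"
  show "(\<forall>n. (\<exists>J. steps (cstep step le) w I J) \<and> I \<in> IdlLevel le n
                  \<longrightarrow> wapp step le w I \<in> IdlLevel le n) \<and>
           (\<forall>n. (\<exists>J. steps (cstep step le) w I J) \<and> I \<subset> wapp step le w I \<and> I \<in> IdlLevel le n
                  \<longrightarrow> winf step le w I \<in> IdlLevel le (Suc n))"
  proof (rule conjI; rule allI; rule impI)
  fix n
  {
    assume h: "(\<exists>J. steps (cstep step le) w I J) \<and> I \<in> IdlLevel le n"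
    then obtain J where s: "steps (cstep step le) w I J" by blast
    have "J = Pw step le w I" "J \<noteq> {}" using steps_iff[OF qo det I, THEN iffD1, OF s] by auto
    moreover have "wapp step le w I = J" by (rule wapp_eq[OF qo det I s])
    moreover have "I \<in> IdlLevel le n" using h by blast
    ultimately show "wapp step le w I \<in> IdlLevel le n" using L by simp
  }
  {
    assume h: "(\<exists>J. steps (cstep step le) w I J) \<and> I \<subset> wapp step le w I \<and> I \<in> IdlLevel le n"
    then obtain J where s: "steps (cstep step le) w I J" by blast
    define hh where "hh k = (wapp step le w ^^ k) I" for k
    have inv: "hh k \<in> Idl le \<and> steps (cstep step le) w (hh k) (hh (Suc k)) \<and> hh k \<subset> hh (Suc k)
       \<and> hh k \<in> IdlLevel le n" for k
    proof (induction k)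
      case 0
      have "wapp step le w I = J" by (rule wapp_eq[OF qo det I s])
      have e0: "hh 0 = I" unfolding hh_def by simp
      have e1: "hh (Suc 0) = J" using \<open>wapp step le w I = J\<close> unfolding hh_def by simp
      have "I \<subset> J" using h \<open>wapp step le w I = J\<close> by blast
      moreover have "I \<in> IdlLevel le n" using h by blast
      ultimately show ?case unfolding e0 e1 using I s by blast
    next
      case (Suc k)
      hence A: "hh k \<in> Idl le" "steps (cstep step le) w (hh k) (hh (Suc k))" "hh k \<subset> hh (Suc k)"
        "hh k \<in> IdlLevel le n" by blast+
      have B: "hh (Suc k) \<in> Idl le" using steps_Idl A(1,2) by blast
      obtain J' where J': "steps (cstep step le) w (hh (Suc k)) J'" "hh (Suc k) \<subset> J'"
        using steps_ssm[OF ssm A(1) B A(3) A(2)] by blast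
      have "hh (Suc (Suc k)) = wapp step le w (hh (Suc k))" unfolding hh_def by simp
      also have "\<dots> = J'" by (rule wapp_eq[OF qo det B J'(1)])
      finally have C: "hh (Suc (Suc k)) = J'" .
      have E: "hh (Suc k) = Pw step le w (hh k) \<and> hh (Suc k) \<noteq> {}"
        using steps_iff[OF qo det A(1), THEN iffD1, OF A(2)] .
      hence "Pw step le w (hh k) \<in> IdlLevel le n" using L A(4) by blast
      hence "hh (Suc k) \<in> IdlLevel le n" using E by simp
      thus ?case using B J' C by blast
    qed
    have "I \<subset> wapp step le w I" using h by blast
    hence "winf step le w I = (\<Union>k. hh k)" unfolding winf_def hh_def by simp
    moreover have "\<forall>i. hh i \<in> IdlLevel le n" "\<forall>i. hh i \<subset> hh (Suc i)" using inv by auto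
    ultimately have "\<exists>f. winf step le w I = (\<Union>i. f i) \<and> (\<forall>i. f i \<in> IdlLevel le n) \<and> (\<forall>i. f i \<subset> f (Suc i))"
      by blast
    thus "winf step le w I \<in> IdlLevel le (Suc n)" by (simp only: IdlLevel.simps mem_Collect_eq)
  }
qed
qed

end
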